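(* Consider a no-slip billiard in the upper half-plane $\{z\ge 0\}$ in which a disk-shaped particle of negligible (but nonzero) radius with rotationally symmetric mass distribution constant $\gamma\ge 0$ moves under a constant force $\mathbf g=(0,0,-g)$, $g>0$, between collisions and collides with the line $z=0$ according to the no-slip law. Let $\mathbf q_n=(x_n,y_n,z_n)$ and $\mathbf p_n=\dot{\mathbf q}_n$ be the position and velocity immediately after the $n$-th collision ($n=0,1,2,\dots$), with $y_0=0$, $z_0=0$ and $\dot z_0>0$, and suppose $\dot x_0\neq 0$. Define the tangential-rotational ratio $\Delta=\dot y_0/\dot x_0$. Then: (i) the post-collision velocities are $2$-periodic: $\mathbf p_{n+2}=\mathbf p_n$ for all $n\ge 0$; (ii) if $\Delta=\gamma$, the orbit in phase space is $2$-periodic: $(\mathbf q_{n+2},\mathbf p_{n+2})=(\mathbf q_n,\mathbf p_n)$ for all $n\ge 0$; (iii) if $\Delta\neq\gamma$, then after every two collisions the particle undergoes the same nonzero net lateral displacement (a constant drift), and the position is unbounded.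
   Context: State coordinates: $x$ is the normalized rotational coordinate $x=\gamma R\vartheta$ ($R$ the particle radius, $\vartheta$ the rotation angle in radians), $y$ is the coordinate along the boundary line, $z$ the height (inward normal direction). The mass distribution constant is $\gamma=\sqrt{2\lambda}/R$ where $\lambda$ is the second moment of inertia per unit mass ($\gamma=0$ point mass, $\gamma=1/\sqrt2$ uniform disk, $\gamma=1$ ring); with these coordinates the kinetic energy is proportional to $\dot x^2+\dot y^2+\dot z^2$. Write $\gamma=\tan(\beta/2)$. Between collisions the particle moves freely under the force ($\ddot x=\ddot y=0$, $\ddot z=-g$). At a collision with $z=0$ with incoming velocity $(\dot x,\dot y,\dot z)$, the no-slip collision law gives outgoing velocity $(-\cos\beta\,\dot x-\sin\beta\,\dot y,\; -\sin\beta\,\dot x+\cos\beta\,\dot y,\; -\dot z)$ (this fixes the relative orientation convention of the rotational and tangential coordinates). Position $\mathbf q_n$ includes the rotational coordinate $x_n$. *)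

theory Defs
  imports "HOL-Analysis.Analysis"
begin

type_synonym vec3 = "real \<times> real \<times> real"
type_synonym state = "vec3 \<times> vec3"   (* (position q, velocity p) *)

definition nsbeta :: "real \<Rightarrow> real" where
  "nsbeta \<gamma> = 2 * arctan \<gamma>"

(* no-slip collision law with the line z = 0 applied to the incoming velocity *)
definition nscoll :: "real \<Rightarrow> vec3 \<Rightarrow> vec3" where
  "nscoll \<gamma> v = (case v of (xd, yd, zd) \<Rightarrow>
     (- cos (nsbeta \<gamma>) * xd - sin (nsbeta \<gamma>) * yd,
      - sin (nsbeta \<gamma>) * xd + cos (nsbeta \<gamma>) * yd,
      - zd))"

(* time until the next collision with z = 0 under free motion
   x'' = y'' = 0, z'' = -g, from height z with vertical velocity zd:
   the positive root of z + zd t - g t^2/2 = 0 *)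
definition nsflight_time :: "real \<Rightarrow> real \<Rightarrow> real \<Rightarrow> real" where
  "nsflight_time g z zd = (zd + sqrt (zd\<^sup>2 + 2 * g * z)) / g"

definition nsbounce :: "real \<Rightarrow> real \<Rightarrow> state \<Rightarrow> state" where
  "nsbounce g \<gamma> s = (case s of ((x, y, z), (xd, yd, zd)) \<Rightarrow>
     (let t = nsflight_time g z zd in
       ((x + xd * t, y + yd * t, z + zd * t - g * t\<^sup>2 / 2),
        nscoll \<gamma> (xd, yd, zd - g * t))))"

(* (q_n, p_n): state immediately after the n-th collision *)
definition nsorbit :: "real \<Rightarrow> real \<Rightarrow> state \<Rightarrow> nat \<Rightarrow> state" where
  "nsorbit g \<gamma> s0 n = (nsbounce g \<gamma> ^^ n) s0"

end

theory Submission
  imports Defs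
begin

lemma bounce_step:
  assumes g: "g > 0" and zd: "zd > 0"
  shows "nsbounce g \<gamma> ((x, y, 0), (a, b, zd)) =
    ((x + a * (2*zd/g), y + b * (2*zd/g), 0),
     (- cos (nsbeta \<gamma>) * a - sin (nsbeta \<gamma>) * b,
      - sin (nsbeta \<gamma>) * a + cos (nsbeta \<gamma>) * b, zd))"
proof -
  have t: "nsflight_time g 0 zd = 2*zd/g"
    using zd by (simp add: nsflight_time_def)
  have z: "zd * (2*zd/g) - g * (2*zd/g)\<^sup>2 / 2 = 0"
    using g by (simp add: field_simps power2_eq_square)
  have v: "zd - g * (2*zd/g) = - zd" using g by (simp add: field_simps)
  have z': "zd * (2*zd/g) - g * (2*zd/g)\<^sup>2 / 2 = 0" using z .
  show ?thesis
    apply (simp only: nsbounce_def Let_def prod.case t add_0 z' v)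
    apply (simp add: nscoll_def)
    done
qed

lemma orbit_Suc: "nsorbit g \<gamma> s (Suc n) = nsbounce g \<gamma> (nsorbit g \<gamma> s n)"
  by (simp add: nsorbit_def)

theorem theorem1:
  fixes g \<gamma> x0 xd0 yd0 zd0 :: real
  assumes "g > 0" and "\<gamma> \<ge> 0" and "zd0 > 0" and "xd0 \<noteq> 0"
  shows "(\<forall>n. snd (nsorbit g \<gamma> ((x0, 0, 0), (xd0, yd0, zd0)) (n + 2))
               = snd (nsorbit g \<gamma> ((x0, 0, 0), (xd0, yd0, zd0)) n))
       \<and> (yd0 / xd0 = \<gamma> \<longrightarrow>
            (\<forall>n. nsorbit g \<gamma> ((x0, 0, 0), (xd0, yd0, zd0)) (n + 2)
                 = nsorbit g \<gamma> ((x0, 0, 0), (xd0, yd0, zd0)) n))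
       \<and> (yd0 / xd0 \<noteq> \<gamma> \<longrightarrow>
            (\<exists>d :: vec3. fst (snd d) \<noteq> 0 \<and>
               (\<forall>n. fst (nsorbit g \<gamma> ((x0, 0, 0), (xd0, yd0, zd0)) (n + 2))
                    = fst (nsorbit g \<gamma> ((x0, 0, 0), (xd0, yd0, zd0)) n) + d))
            \<and> \<not> bounded (range (\<lambda>n. fst (nsorbit g \<gamma> ((x0, 0, 0), (xd0, yd0, zd0)) n))))"
proof -
  let ?O = "nsorbit g \<gamma> ((x0, 0, 0), (xd0, yd0, zd0))"
  define c where "c = cos (nsbeta \<gamma>)"
  define s where "s = sin (nsbeta \<gamma>)"
  define T where "T = 2*zd0/g"
  define a1 where "a1 = - c * xd0 - s * yd0"
  define b1 where "b1 = - s * xd0 + c * yd0"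
  have cs: "c\<^sup>2 + s\<^sup>2 = 1" unfolding c_def s_def by simp
  have "- c * a1 - s * b1 = (c\<^sup>2 + s\<^sup>2) * xd0" unfolding a1_def b1_def
    by (simp add: algebra_simps power2_eq_square)
  hence back1: "- c * a1 - s * b1 = xd0" using cs by simp
  have "- s * a1 + c * b1 = (c\<^sup>2 + s\<^sup>2) * yd0" unfolding a1_def b1_def
    by (simp add: algebra_simps power2_eq_square)
  hence back2: "- s * a1 + c * b1 = yd0" using cs by simp
  have step: "\<And>x y a b. nsbounce g \<gamma> ((x, y, 0), (a, b, zd0)) =
     ((x + a * T, y + b * T, 0), (- c * a - s * b, - s * a + c * b, zd0))"
    using bounce_step[OF assms(1) assms(3)] unfolding c_def s_def T_def by blast
  have odd_of: "?O (2*k+1) = ((x0 + k*T*(xd0+a1) + xd0*T, k*T*(yd0+b1) + yd0*T, 0), (a1, b1, zd0))"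
    if "?O (2*k) = ((x0 + k*T*(xd0+a1), k*T*(yd0+b1), 0), (xd0, yd0, zd0))" for k :: nat
    using that by (simp add: orbit_Suc step a1_def b1_def)
  have even: "?O (2*k) = ((x0 + k*T*(xd0+a1), k*T*(yd0+b1), 0), (xd0, yd0, zd0))" for k :: nat
  proof (induction k)
    case 0
    show ?case by (simp add: nsorbit_def)
  next
    case (Suc k)
    have "?O (2 * Suc k) = nsbounce g \<gamma> (?O (2*k+1))"
      by (simp add: orbit_Suc[symmetric])
    also have "\<dots> = ((x0 + real (Suc k)*T*(xd0+a1), real (Suc k)*T*(yd0+b1), 0), (xd0, yd0, zd0))"
      unfolding odd_of[OF Suc.IH] step back1 back2 by (simp add: algebra_simps)
    finally show ?case .
  qed
  have odd: "?O (2*k+1) = ((x0 + k*T*(xd0+a1) + xd0*T, k*T*(yd0+b1) + yd0*T, 0), (a1, b1, zd0))" for k :: nat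
    using odd_of[OF even] .
  define d :: vec3 where "d = (T*(xd0+a1), T*(yd0+b1), 0)"
  have per: "?O (n+2) = (fst (?O n) + d, snd (?O n))" for n
  proof (cases "even n")
    case True
    then obtain k where k: "n = 2*k" by blast
    have "n + 2 = 2 * Suc k" using k by simp
    then show ?thesis unfolding k using even[of k] even[of "Suc k"]
      by (simp add: d_def algebra_simps)
  next
    case False
    then obtain k where k: "n = 2*k+1" using oddE by blast
    have "n + 2 = 2 * Suc k + 1" using k by simp
    then show ?thesis unfolding k using odd[of k] odd[of "Suc k"]
      by (simp add: d_def algebra_simps)
  qed
  have q: "1 + \<gamma>\<^sup>2 > 0" by (simp add: add_pos_nonneg)
  have sq: "(sqrt (1 + \<gamma>\<^sup>2))\<^sup>2 = 1 + \<gamma>\<^sup>2" using q by simp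
  have cval: "c = (1 - \<gamma>\<^sup>2) / (1 + \<gamma>\<^sup>2)"
    unfolding c_def nsbeta_def cos_double cos_arctan sin_arctan
    using sq by (simp add: power_divide diff_divide_distrib)
  have sval: "s = 2 * \<gamma> / (1 + \<gamma>\<^sup>2)"
    unfolding s_def nsbeta_def sin_double cos_arctan sin_arctan
    using sq by (simp add: power2_eq_square[symmetric])
  have c1: "c * (1 + \<gamma>\<^sup>2) = 1 - \<gamma>\<^sup>2" using cval q by simp
  have s1: "s * (1 + \<gamma>\<^sup>2) = 2 * \<gamma>" using sval q by simp
  have "(xd0 + a1) * (1 + \<gamma>\<^sup>2) = xd0 * (1 + \<gamma>\<^sup>2) - (c * (1 + \<gamma>\<^sup>2)) * xd0 - (s * (1 + \<gamma>\<^sup>2)) * yd0"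
    unfolding a1_def by (simp add: algebra_simps)
  also have "\<dots> = 2 * \<gamma> * (\<gamma> * xd0 - yd0)" unfolding c1 s1 by (simp add: algebra_simps power2_eq_square)
  finally have ex: "xd0 + a1 = 2 * \<gamma> * (\<gamma> * xd0 - yd0) / (1 + \<gamma>\<^sup>2)"
    using q by (simp add: eq_divide_eq)
  have "(yd0 + b1) * (1 + \<gamma>\<^sup>2) = yd0 * (1 + \<gamma>\<^sup>2) - (s * (1 + \<gamma>\<^sup>2)) * xd0 + (c * (1 + \<gamma>\<^sup>2)) * yd0"
    unfolding b1_def by (simp add: algebra_simps)
  also have "\<dots> = 2 * (yd0 - \<gamma> * xd0)" unfolding c1 s1 by (simp add: algebra_simps power2_eq_square)
  finally have ey: "yd0 + b1 = 2 * (yd0 - \<gamma> * xd0) / (1 + \<gamma>\<^sup>2)"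
    using q by (simp add: eq_divide_eq)
  have T0: "T > 0" unfolding T_def using assms by simp
  have P1: "\<forall>n. snd (?O (n + 2)) = snd (?O n)" using per by simp
  have P2: "yd0 / xd0 = \<gamma> \<longrightarrow> (\<forall>n. ?O (n + 2) = ?O n)"
  proof
    assume "yd0 / xd0 = \<gamma>"
    hence "yd0 = \<gamma> * xd0" using assms(4) by (simp add: field_simps)
    hence "d = 0" unfolding d_def ex ey by (simp add: zero_prod_def)
    thus "\<forall>n. ?O (n + 2) = ?O n" using per by simp
  qed
  have P3: "yd0 / xd0 \<noteq> \<gamma> \<longrightarrow> (\<exists>d :: vec3. fst (snd d) \<noteq> 0 \<and>
               (\<forall>n. fst (?O (n + 2)) = fst (?O n) + d))
            \<and> \<not> bounded (range (\<lambda>n. fst (?O n)))"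
  proof
    assume "yd0 / xd0 \<noteq> \<gamma>"
    hence ne: "yd0 - \<gamma> * xd0 \<noteq> 0" using assms(4) by (simp add: field_simps)
    hence dy: "T*(yd0+b1) \<noteq> 0" unfolding ey using T0 q by simp
    have A: "\<exists>d :: vec3. fst (snd d) \<noteq> 0 \<and> (\<forall>n. fst (?O (n + 2)) = fst (?O n) + d)"
      using dy per by (intro exI[of _ d]) (simp add: d_def)
    have B: "\<not> bounded (range (\<lambda>n. fst (?O n)))"
    proof
      assume "bounded (range (\<lambda>n. fst (?O n)))"
      then obtain B where B: "\<And>n. norm (fst (?O n)) \<le> B"
        unfolding bounded_iff by blast
      obtain k :: nat where k: "B / \<bar>T*(yd0+b1)\<bar> < real k" using reals_Archimedean2 by blast
      let ?y = "real k*T*(yd0+b1)"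
      have "norm ?y \<le> norm (?y, 0::real)" by (rule norm_fst_le)
      also have "\<dots> \<le> norm (x0 + k*T*(xd0+a1), ?y, 0::real)" by (rule norm_snd_le)
      also have "\<dots> = norm (fst (?O (2*k)))" using even[of k] by simp
      also have "\<dots> \<le> B" by (rule B)
      finally have "\<bar>k*T*(yd0+b1)\<bar> \<le> B" by simp
      hence "real k * \<bar>T*(yd0+b1)\<bar> \<le> B" by (simp add: abs_mult)
      moreover have "B < real k * \<bar>T*(yd0+b1)\<bar>" using k dy by (simp add: field_simps)
      ultimately show False by simp
    qed
    show "(\<exists>d :: vec3. fst (snd d) \<noteq> 0 \<and> (\<forall>n. fst (?O (n + 2)) = fst (?O n) + d))
            \<and> \<not> bounded (range (\<lambda>n. fst (?O n)))" using A B by blast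
  qed
  show ?thesis using P1 P2 P3 by blast
qed

end
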